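(* Let $\Gamma=(V,\nu,\mu)$ be a fuzzy graph on $n$ vertices that is not fuzzy-regular, with maximum fuzzy degree $\Delta$ and minimum fuzzy degree $\delta$. Then $$\sigma^*(\Gamma)\ge\frac{(\Delta-\delta)^2}{n^2}.$$
   Context: A fuzzy graph $\Gamma=(V,\nu,\mu)$ consists of a finite vertex set $V$ with $|V|=n\ge1$, a map $\nu:V\to[0,1]$, and a symmetric map $\mu:V\times V\to[0,1]$ with $\mu(u,v)\le\min(\nu(u),\nu(v))$. The fuzzy degree is $d_\Gamma(v)=\sum_{u\ne v}\mu(v,u)$; $\Gamma$ is fuzzy-regular if all fuzzy degrees are equal. The fuzzy size is $\mathrm{ew}(\Gamma)=\frac12\sum_v d_\Gamma(v)$, $\lambda=2\,\mathrm{ew}(\Gamma)/n$, and the fuzzy sigma index is $\sigma^*(\Gamma)=\frac1n\sum_{v}(d_\Gamma(v)-\lambda)^2$. $\Delta=\max_v d_\Gamma(v)$, $\delta=\min_v d_\Gamma(v)$. *)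

theory Defs
  imports Main "HOL-Library.Multiset" Complex_Main
begin

definition fuzzy_graph :: "'a set \<Rightarrow> ('a \<Rightarrow> real) \<Rightarrow> ('a \<Rightarrow> 'a \<Rightarrow> real) \<Rightarrow> bool" where
  "fuzzy_graph V \<nu> \<mu> \<longleftrightarrow> finite V \<and> V \<noteq> {} \<and>
     (\<forall>v\<in>V. 0 \<le> \<nu> v \<and> \<nu> v \<le> 1) \<and>
     (\<forall>u\<in>V. \<forall>v\<in>V. 0 \<le> \<mu> u v \<and> \<mu> u v \<le> 1 \<and> \<mu> u v = \<mu> v u \<and> \<mu> u v \<le> min (\<nu> u) (\<nu> v))"

definition fuzzy_degree :: "'a set \<Rightarrow> ('a \<Rightarrow> 'a \<Rightarrow> real) \<Rightarrow> 'a \<Rightarrow> real" where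
  "fuzzy_degree V \<mu> v = (\<Sum>u\<in>V - {v}. \<mu> v u)"

definition fuzzy_regular :: "'a set \<Rightarrow> ('a \<Rightarrow> 'a \<Rightarrow> real) \<Rightarrow> bool" where
  "fuzzy_regular V \<mu> \<longleftrightarrow> (\<forall>u\<in>V. \<forall>v\<in>V. fuzzy_degree V \<mu> u = fuzzy_degree V \<mu> v)"

definition fuzzy_size :: "'a set \<Rightarrow> ('a \<Rightarrow> 'a \<Rightarrow> real) \<Rightarrow> real" where
  "fuzzy_size V \<mu> = (\<Sum>v\<in>V. fuzzy_degree V \<mu> v) / 2"

definition fuzzy_lambda :: "'a set \<Rightarrow> ('a \<Rightarrow> 'a \<Rightarrow> real) \<Rightarrow> real" where
  "fuzzy_lambda V \<mu> = 2 * fuzzy_size V \<mu> / real (card V)"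

definition fuzzy_sigma :: "'a set \<Rightarrow> ('a \<Rightarrow> 'a \<Rightarrow> real) \<Rightarrow> real" where
  "fuzzy_sigma V \<mu> = (\<Sum>v\<in>V. (fuzzy_degree V \<mu> v - fuzzy_lambda V \<mu>)^2) / real (card V)"

definition max_fuzzy_degree :: "'a set \<Rightarrow> ('a \<Rightarrow> 'a \<Rightarrow> real) \<Rightarrow> real" where
  "max_fuzzy_degree V \<mu> = Max (fuzzy_degree V \<mu> ` V)"

definition min_fuzzy_degree :: "'a set \<Rightarrow> ('a \<Rightarrow> 'a \<Rightarrow> real) \<Rightarrow> real" where
  "min_fuzzy_degree V \<mu> = Min (fuzzy_degree V \<mu> ` V)"

end

theory Submission
  imports Defs
begin

theorem proposition2p10:
  fixes V :: "'a set" and \<nu> :: "'a \<Rightarrow> real" and \<mu> :: "'a \<Rightarrow> 'a \<Rightarrow> real"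
  assumes "fuzzy_graph V \<nu> \<mu>"
    and "\<not> fuzzy_regular V \<mu>"
  shows "fuzzy_sigma V \<mu> \<ge>
           (max_fuzzy_degree V \<mu> - min_fuzzy_degree V \<mu>)^2 / (real (card V))^2"
proof -
  define d where "d = fuzzy_degree V \<mu>"
  define l where "l = fuzzy_lambda V \<mu>"
  define n where "n = real (card V)"
  have fin: "finite V" and ne: "V \<noteq> {}" using assms(1) by (auto simp: fuzzy_graph_def)
  obtain a where a: "a \<in> V" "d a = max_fuzzy_degree V \<mu>"
    proof -
    have "Max (d ` V) \<in> d ` V" using fin ne by (intro Max_in) auto
    then show ?thesis using that unfolding max_fuzzy_degree_def d_def by auto
  qed
  obtain b where b: "b \<in> V" "d b = min_fuzzy_degree V \<mu>"
    proof -
    have "Min (d ` V) \<in> d ` V" using fin ne by (intro Min_in) auto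
    then show ?thesis using that unfolding min_fuzzy_degree_def d_def by auto
  qed
  have sig: "fuzzy_sigma V \<mu> = (\<Sum>v\<in>V. (d v - l)^2) / n"
    unfolding fuzzy_sigma_def d_def l_def n_def ..
  have npos: "n > 0" using fin ne unfolding n_def by (simp add: card_gt_0_iff)
  show ?thesis
  proof (cases "a = b")
    case True
    have "0 \<le> fuzzy_sigma V \<mu>" unfolding sig using npos
      by (intro divide_nonneg_pos sum_nonneg) auto
    then show ?thesis using True a b by simp
  next
    case False
    have "card {a, b} \<le> card V" using a b fin by (intro card_mono) auto
    hence n2: "n \<ge> 2" using False unfolding n_def by simp
    have "(\<Sum>v\<in>{a,b}. (d v - l)^2) \<le> (\<Sum>v\<in>V. (d v - l)^2)"
      using a b fin by (intro sum_mono2) auto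
    hence s: "(d a - l)^2 + (d b - l)^2 \<le> (\<Sum>v\<in>V. (d v - l)^2)" using False by simp
    have q: "(d a - d b)^2 / 2 \<le> (d a - l)^2 + (d b - l)^2"
    proof -
      have "0 \<le> (d a + d b - 2*l)^2" by simp
      moreover have "(d a - l)^2 + (d b - l)^2 = (d a - d b)^2 / 2 + (d a + d b - 2*l)^2 / 2"
        by (simp add: power2_eq_square field_simps)
      ultimately show ?thesis by simp
    qed
    have "(d a - d b)^2 / n^2 \<le> (d a - d b)^2 / (2*n)"
      using n2 npos by (intro divide_left_mono) (auto simp: power2_eq_square)
    also have "\<dots> = ((d a - d b)^2 / 2) / n" by simp
    also have "\<dots> \<le> (\<Sum>v\<in>V. (d v - l)^2) / n"
      using q s npos by (intro divide_right_mono) auto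
    finally show ?thesis using a b sig unfolding n_def by simp
  qed
qed

end
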